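(* In the connectivity graph model, a shape $S$ can be grown from a single node if and only if $S$ is a tree.
   Context: Shapes. Grid points are integer pairs $(x,y)$; two grid points are adjacent if they are at orthogonal (Manhattan) distance $1$. A shape $S=(V,E)$ is a finite connected graph whose nodes occupy distinct grid points and whose edges join only pairs of nodes occupying adjacent points; shapes are considered up to translation. Growth operations. One node, the anchor $u_0$, is stationary; other nodes move relative to it, and a tree is rooted at $u_0$. A growth operation on a node $u$ toward an adjacent grid point $p$ either (i) if $u$ has no edge to $p$, creates a new node $u'$ at $p$ with edge $uu'$; or (ii) if $p$ is occupied by a node $v$ with $uv\in E$, creates a new node $u'$ at $p$, replaces edge $uv$ by edges $uu',u'v$, and translates by one unit, along the axis of $uv$, the part of the tree hanging from whichever of $u,v$ is farther from $u_0$, away from the other endpoint. In one time step a set of operations is applied concurrently, each node receiving at most one operation and all operations having the same cardinal direction; the displacement of each node is the sum of the unit vectors contributed by the operations on its path to $u_0$. The set is collision-free if no two nodes collide during these motions or end at the same point. Growth processes (connectivity graph model). A growth process from an initial shape $S_0$ performs time steps $t=1,2,\dots$, each applying a collision-free set of growth operations to the current shape; no edges are deleted and no edges are created other than by the operations. It grows $S$ from $S_0$ in $t_f$ time steps if the shape obtained after step $t_f$ is $S$. *)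

theory Defs
  imports Complex_Main "HOL-Library.Product_Plus"
begin

type_synonym point = "int \<times> int"

definition grid_adj :: "point \<Rightarrow> point \<Rightarrow> bool" where
  "grid_adj p q \<longleftrightarrow> \<bar>fst p - fst q\<bar> + \<bar>snd p - snd q\<bar> = 1"

definition edge_rel :: "'a set set \<Rightarrow> ('a \<times> 'a) set" where
  "edge_rel E = {(x, y). {x, y} \<in> E}"

definition connected_graph :: "'a set \<Rightarrow> 'a set set \<Rightarrow> bool" where
  "connected_graph V E \<longleftrightarrow> (\<forall>p\<in>V. \<forall>q\<in>V. (p, q) \<in> (edge_rel E)\<^sup>*)"

definition is_shape :: "point set \<Rightarrow> point set set \<Rightarrow> bool" where
  "is_shape V E \<longleftrightarrow> finite V \<and> V \<noteq> {} \<and>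
     (\<forall>e\<in>E. \<exists>p q. e = {p, q} \<and> p \<in> V \<and> q \<in> V \<and> grid_adj p q) \<and>
     connected_graph V E"

definition has_cycle :: "'a set \<Rightarrow> 'a set set \<Rightarrow> bool" where
  "has_cycle V E \<longleftrightarrow> (\<exists>xs. 3 \<le> length xs \<and> distinct xs \<and> set xs \<subseteq> V \<and>
     (\<forall>i<length xs. {xs ! i, xs ! (Suc i mod length xs)} \<in> E))"

definition is_tree :: "'a set \<Rightarrow> 'a set set \<Rightarrow> bool" where
  "is_tree V E \<longleftrightarrow> connected_graph V E \<and> \<not> has_cycle V E"

definition translate_equiv :: "point set \<times> point set set \<Rightarrow> point set \<times> point set set \<Rightarrow> bool" where
  "translate_equiv S T \<longleftrightarrow> (\<exists>\<tau>::point.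
     fst T = (\<lambda>p. p + \<tau>) ` fst S \<and> snd T = (\<lambda>e. (\<lambda>p. p + \<tau>) ` e) ` snd S)"

text \<open>Configurations during a growth process: labelled nodes, their positions,
  edges between labels, and the anchor node.\<close>
record config =
  cV :: "nat set"
  cpos :: "nat \<Rightarrow> point"
  cE :: "nat set set"
  canchor :: nat

definition shape_of :: "config \<Rightarrow> point set \<times> point set set" where
  "shape_of c = (cpos c ` cV c, (\<lambda>e. cpos c ` e) ` cE c)"

definition single_node :: config where
  "single_node = \<lparr>cV = {0}, cpos = (\<lambda>_. (0, 0)), cE = {}, canchor = 0\<rparr>"

definition cardinal_dirs :: "point set" where
  "cardinal_dirs = {(1, 0), (-1, 0), (0, 1), (0, -1)}"

definition gdist :: "config \<Rightarrow> nat \<Rightarrow> nat" where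
  "gdist c w = (LEAST n. (canchor c, w) \<in> (edge_rel (cE c)) ^^ n)"

text \<open>Node w belongs to the part of the tree hanging from x (w = x, or every path
  from w to the anchor passes through x).\<close>
definition hangs_from :: "config \<Rightarrow> nat \<Rightarrow> nat \<Rightarrow> bool" where
  "hangs_from c x w \<longleftrightarrow> w \<in> cV c \<and>
     (w = x \<or> (canchor c, w) \<notin> (edge_rel (cE c) \<inter> ((cV c - {x}) \<times> (cV c - {x})))\<^sup>*)"

definition has_nbr :: "config \<Rightarrow> nat \<Rightarrow> point \<Rightarrow> bool" where
  "has_nbr c u d \<longleftrightarrow> (\<exists>v\<in>cV c. {u, v} \<in> cE c \<and> cpos c v = cpos c u + d)"

definition nbr :: "config \<Rightarrow> nat \<Rightarrow> point \<Rightarrow> nat" where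
  "nbr c u d = (SOME v. v \<in> cV c \<and> {u, v} \<in> cE c \<and> cpos c v = cpos c u + d)"

text \<open>Displacement of an existing node w caused by the set Ops of operations in direction d:
  each type-(ii) operation on edge uv translates the part hanging from the endpoint f
  farther from the anchor by one unit away from the other endpoint n.\<close>
definition disp :: "config \<Rightarrow> nat set \<Rightarrow> point \<Rightarrow> nat \<Rightarrow> point" where
  "disp c Ops d w = (\<Sum>u\<in>{u\<in>Ops. has_nbr c u d}.
      (let v = nbr c u d;
           (f, n) = (if gdist c u < gdist c v then (v, u) else (u, v))
       in if hangs_from c f w then cpos c f - cpos c n else 0))"

definition traj :: "point \<Rightarrow> point \<Rightarrow> real \<Rightarrow> real \<times> real" where
  "traj p D t = (of_int (fst p) + t * of_int (fst D), of_int (snd p) + t * of_int (snd D))"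

text \<open>One time step: a set Ops of nodes each receiving one growth operation, all in
  the same cardinal direction d; nw u is the new node created by the operation on u.
  Existing nodes move linearly by their displacement; the new node created by the
  operation on u emerges from u and ends one unit from u's final position in direction d.
  Collision-free: no two distinct nodes occupy the same point at any time in (0,1]
  (at time 0 a new node coincides with its creator).\<close>
definition growth_step :: "config \<Rightarrow> config \<Rightarrow> bool" where
  "growth_step c c' \<longleftrightarrow> (\<exists>d Ops nw.
     d \<in> cardinal_dirs \<and> Ops \<subseteq> cV c \<and> finite Ops \<and> inj_on nw Ops \<and> nw ` Ops \<inter> cV c = {} \<and>
     cV c' = cV c \<union> nw ` Ops \<and>
     canchor c' = canchor c \<and>
     (\<forall>w\<in>cV c. cpos c' w = cpos c w + disp c Ops d w) \<and>
     (\<forall>u\<in>Ops. cpos c' (nw u) = cpos c u + disp c Ops d u + d) \<and>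
     cE c' = (cE c - {{u, nbr c u d} | u. u \<in> Ops \<and> has_nbr c u d})
             \<union> {{u, nw u} | u. u \<in> Ops}
             \<union> {{nw u, nbr c u d} | u. u \<in> Ops \<and> has_nbr c u d} \<and>
     (let start = (\<lambda>w. if w \<in> cV c then cpos c w else cpos c (inv_into Ops nw w));
          move = (\<lambda>w. if w \<in> cV c then disp c Ops d w
                       else disp c Ops d (inv_into Ops nw w) + d)
      in \<forall>a\<in>cV c'. \<forall>b\<in>cV c'. a \<noteq> b \<longrightarrow>
           (\<forall>t::real. 0 < t \<and> t \<le> 1 \<longrightarrow> traj (start a) (move a) t \<noteq> traj (start b) (move b) t)))"

end

theory Submission
  imports Defs
begin

lemma tstruct_no_cycle:
  fixes h :: "'a \<Rightarrow> real"
  assumes hp: "\<forall>x\<in>P. h (par x) < h x" and E: "E = {{x, par x}|x. x\<in>P}"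
  shows "\<not> has_cycle V E"
proof
  assume "has_cycle V E"
  then obtain xs where len: "3 \<le> length xs" and dist: "distinct xs"
    and ed: "\<forall>i<length xs. {xs!i, xs!(Suc i mod length xs)} \<in> E"
    unfolding has_cycle_def by blast
  define n where "n = length xs"
  have n3: "3 \<le> n" using len n_def by simp
  have "finite ((\<lambda>j. h (xs!j)) ` {..<n})" "(\<lambda>j. h (xs!j)) ` {..<n} \<noteq> {}" using n3 by (auto simp: lessThan_empty_iff)
  then have "Max ((\<lambda>j. h (xs!j)) ` {..<n}) \<in> (\<lambda>j. h (xs!j)) ` {..<n}" by (rule Max_in)
  then obtain i where i: "i < n" and iM: "h (xs!i) = Max ((\<lambda>j. h (xs!j)) ` {..<n})" by auto
  have imax: "\<And>j. j < n \<Longrightarrow> h (xs!j) \<le> h (xs!i)" unfolding iM by (rule Max_ge) auto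
  have key: "par (xs!i) = xs!b" if b: "b<n" "b\<noteq>i" "{xs!i, xs!b} \<in> E" for b
  proof -
    obtain x where x: "x\<in>P" "{xs!i, xs!b} = {x, par x}" using E b(3) by blast
    have ne: "xs!i \<noteq> xs!b" using dist b i by (simp add: n_def nth_eq_iff_index_eq)
    from x(2) ne have "(xs!i = x \<and> xs!b = par x) \<or> (xs!i = par x \<and> xs!b = x)"
      by (auto simp: doubleton_eq_iff)
    then show ?thesis
    proof
      assume "xs!i = par x \<and> xs!b = x"
      then have "h (xs!i) < h (xs!b)" using hp x(1) by auto
      with imax b show ?thesis by force
    qed auto
  qed
  define j where "j = (if Suc i = n then 0 else Suc i)"
  define k where "k = (if i = 0 then n - 1 else i - 1)"
  have j1: "Suc i mod n = j" using i unfolding j_def by auto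
  have k1: "Suc k mod n = i" using i n3 unfolding k_def by auto
  have jk: "j < n" "k < n" "j \<noteq> i" "k \<noteq> i" "j \<noteq> k" using i n3 unfolding j_def k_def by auto
  have "{xs!i, xs!j} \<in> E" using ed i j1 by (metis n_def)
  with key jk have 1: "par (xs!i) = xs!j" by blast
  have "{xs!k, xs!i} \<in> E" using ed jk k1 by (metis n_def)
  then have "{xs!i, xs!k} \<in> E" by (simp add: insert_commute)
  with key jk have 2: "par (xs!i) = xs!k" by blast
  from 1 2 have "xs!j = xs!k" by simp
  with dist jk show False by (simp add: n_def nth_eq_iff_index_eq)
qed

lemma leaf_exists:
  assumes fin: "finite V" and conn: "connected_graph V E"
    and edges: "\<forall>e\<in>E. \<exists>p q. e = {p,q} \<and> p\<in>V \<and> q\<in>V \<and> p\<noteq>q"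
    and two: "2 \<le> card V" and nc: "\<not> has_cycle V E"
  shows "\<exists>x y. {x,y} \<in> E \<and> x\<noteq>y \<and> (\<forall>z. {x,z}\<in>E \<longrightarrow> z = y)"
proof -
  have edV: "a \<in> V \<and> b \<in> V \<and> a \<noteq> b" if "{a,b} \<in> E" for a b
    using edges that by (metis doubleton_eq_iff insert_absorb2 singleton_insert_inj_eq)
  define path where "path xs \<longleftrightarrow> distinct xs \<and> set xs \<subseteq> V \<and> (\<forall>i. Suc i < length xs \<longrightarrow> {xs!i, xs!Suc i} \<in> E)" for xs
  obtain a b where ab: "a \<in> V" "b \<in> V" "a \<noteq> b"
  proof -
    have "\<not> card V \<le> Suc 0" using two by simp
    then show ?thesis using that card_le_Suc0_iff_eq[OF fin] by blast
  qed
  have "(a,b) \<in> (edge_rel E)\<^sup>*" using conn ab unfolding connected_graph_def by blast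
  then obtain b' where "(a,b') \<in> edge_rel E" using ab(3) by (metis converse_rtranclE)
  then have ab': "{a,b'} \<in> E" by (simp add: edge_rel_def)
  have p0: "path [a,b']" using edV[OF ab'] ab' unfolding path_def by auto
  have bnd: "\<forall>q. path q \<longrightarrow> length q < card V + 1"
  proof (intro allI impI)
    fix q assume "path q"
    then have "card (set q) = length q" "card (set q) \<le> card V"
      unfolding path_def using distinct_card card_mono fin by auto
    then show "length q < card V + 1" by simp
  qed
  obtain p where p: "path p" and pmax: "\<forall>q. path q \<longrightarrow> length q \<le> length p"
    using ex_has_greatest_nat[of path, OF p0 bnd] by blast
  have lp: "2 \<le> length p" using pmax p0 by force
  have xy: "{p!0, p!1} \<in> E" using p lp unfolding path_def by (metis One_nat_def Suc_1 Suc_le_lessD)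
  have "p!0 \<noteq> p!1" using edV[OF xy] by simp
  moreover have "\<forall>z. {p!0,z}\<in>E \<longrightarrow> z = p!1"
  proof (intro allI impI, rule ccontr)
    fix z assume z: "{p!0,z} \<in> E" "z \<noteq> p!1"
    have zx: "z \<noteq> p!0" "z \<in> V" using edV[OF z(1)] by auto
    show False
    proof (cases "z \<in> set p")
      case False
      have "path (z#p)" unfolding path_def
      proof (intro conjI allI impI)
        show "distinct (z#p)" using False p unfolding path_def by simp
        show "set (z#p) \<subseteq> V" using zx p unfolding path_def by simp
        fix i assume "Suc i < length (z#p)"
        then show "{(z#p)!i, (z#p)!Suc i} \<in> E"
          using p z(1) unfolding path_def by (cases i) (auto simp: insert_commute)
      qed
      then show False using pmax by force
    next
      case True
      then obtain j where j: "j < length p" "p!j = z" by (metis in_set_conv_nth)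
      have j2: "2 \<le> j" using j zx z(2) by (cases j; cases "j - 1"; auto)
      define t where "t = take (Suc j) p"
      have lt: "length t = Suc j" using j unfolding t_def by simp
      have "has_cycle V E" unfolding has_cycle_def
      proof (intro exI conjI allI impI)
        show "3 \<le> length t" using lt j2 by simp
        show "distinct t" using p unfolding t_def path_def by simp
        show "set t \<subseteq> V" using p unfolding t_def path_def by (meson order.trans set_take_subset)
        fix i assume i: "i < length t"
        show "{t ! i, t ! (Suc i mod length t)} \<in> E"
        proof (cases "i = j")
          case True
          then show ?thesis using lt j z(1) unfolding t_def by (simp add: insert_commute)
        next
          case False
          then have "i < j" using i lt by simp
          then show ?thesis using lt j p unfolding t_def path_def by simp
        qed
      qed
      then show False using nc by simp
    qed
  qed
  ultimately show ?thesis using xy by blast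
qed

lemma remove_leaf_conn:
  assumes conn: "connected_graph V E" and leaf: "\<forall>z. {x,z}\<in>E \<longrightarrow> z=y"
    and y: "y\<in>V" and xy: "x\<noteq>y"
  shows "connected_graph (V - {x}) (E - {{x,y}})"
proof -
  define R where "R = edge_rel E"
  define R' where "R' = edge_rel (E - {{x,y}})"
  have claim: "(y,q) \<in> R\<^sup>* \<Longrightarrow> q = x \<or> (y,q) \<in> R'\<^sup>*" for q
  proof (induction rule: rtrancl_induct)
    case base then show ?case by simp
  next
    case (step q q')
    show ?case
    proof (cases "q' = x")
      case False
      show ?thesis
      proof (cases "q = x")
        case True
        then have "q' = y" using step(2) leaf unfolding R_def edge_rel_def by auto
        then show ?thesis by simp
      next
        case qx: False
        then have "(y,q) \<in> R'\<^sup>*" using step(3) by simp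
        moreover have "(q,q') \<in> R'" using step(2) qx False
          unfolding R_def R'_def edge_rel_def by (auto simp: doubleton_eq_iff)
        ultimately show ?thesis by (meson rtrancl_into_rtrancl)
      qed
    qed simp
  qed
  have symR: "R'\<inverse> = R'" unfolding R'_def edge_rel_def by (auto simp: insert_commute)
  show ?thesis unfolding connected_graph_def
  proof (intro ballI)
    fix p q assume p: "p \<in> V - {x}" and q: "q \<in> V - {x}"
    have "(y,p) \<in> R'\<^sup>*" using claim[of p] conn p y unfolding connected_graph_def R_def by blast
    then have "(p,y) \<in> R'\<^sup>*" using rtrancl_converseI[of y p R'] symR by simp
    moreover have "(y,q) \<in> R'\<^sup>*" using claim[of q] conn q y unfolding connected_graph_def R_def by blast
    ultimately show "(p,q) \<in> (edge_rel (E - {{x,y}}))\<^sup>*" unfolding R'_def by simp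
  qed
qed


definition good :: "config \<Rightarrow> bool" where
 "good c \<longleftrightarrow> finite (cV c) \<and> inj_on (cpos c) (cV c) \<and>
   (\<exists>P par (h::nat\<Rightarrow>real). P \<subseteq> cV c \<and> (\<forall>x\<in>P. par x \<in> cV c \<and> h (par x) < h x)
      \<and> cE c = {{x, par x}|x. x\<in>P})"

lemma nbr_props:
  assumes "has_nbr c u d"
  shows "nbr c u d \<in> cV c \<and> {u, nbr c u d} \<in> cE c \<and> cpos c (nbr c u d) = cpos c u + d"
proof -
  obtain v where "v \<in> cV c \<and> {u, v} \<in> cE c \<and> cpos c v = cpos c u + d"
    using assms unfolding has_nbr_def by blast
  then show ?thesis unfolding nbr_def by (rule someI)
qed

lemma dir_ne: "d \<in> cardinal_dirs \<Longrightarrow> d \<noteq> 0 \<and> d + d \<noteq> 0"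
  unfolding cardinal_dirs_def by (auto simp: prod_eq_iff)

lemma traj1: "traj p D 1 = (of_int (fst (p + D)), of_int (snd (p + D)))"
  unfolding traj_def by simp

lemma good_step:
  assumes g: "good c" and st: "growth_step c c'"
  shows "good c'"
proof -
  obtain P par and h :: "nat \<Rightarrow> real" where P: "P \<subseteq> cV c"
    and hp: "\<forall>x\<in>P. par x \<in> cV c \<and> h (par x) < h x" and E: "cE c = {{x, par x}|x. x\<in>P}"
    and fin: "finite (cV c)" and inj: "inj_on (cpos c) (cV c)"
    using g[unfolded good_def] by (elim exE conjE) (rule that; assumption)
  obtain d Ops nw where
    d: "d \<in> cardinal_dirs" and Ops: "Ops \<subseteq> cV c" "finite Ops" and injnw: "inj_on nw Ops"
    and fresh: "nw ` Ops \<inter> cV c = {}" and V': "cV c' = cV c \<union> nw ` Ops"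
    and pos_old: "\<forall>w\<in>cV c. cpos c' w = cpos c w + disp c Ops d w"
    and pos_new: "\<forall>u\<in>Ops. cpos c' (nw u) = cpos c u + disp c Ops d u + d"
    and E': "cE c' = (cE c - {{u, nbr c u d} | u. u \<in> Ops \<and> has_nbr c u d})
             \<union> {{u, nw u} | u. u \<in> Ops}
             \<union> {{nw u, nbr c u d} | u. u \<in> Ops \<and> has_nbr c u d}"
    and coll: "let start = (\<lambda>w. if w \<in> cV c then cpos c w else cpos c (inv_into Ops nw w));
          move = (\<lambda>w. if w \<in> cV c then disp c Ops d w
                       else disp c Ops d (inv_into Ops nw w) + d)
      in \<forall>a\<in>cV c'. \<forall>b\<in>cV c'. a \<noteq> b \<longrightarrow>
           (\<forall>t::real. 0 < t \<and> t \<le> 1 \<longrightarrow> traj (start a) (move a) t \<noteq> traj (start b) (move b) t)"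
    using st[unfolded growth_step_def] by (elim exE conjE) (rule that; assumption)
  have fin': "finite (cV c')" using V' fin Ops by simp
  define start where "start = (\<lambda>w. if w \<in> cV c then cpos c w else cpos c (inv_into Ops nw w))"
  define move where "move = (\<lambda>w. if w \<in> cV c then disp c Ops d w
                       else disp c Ops d (inv_into Ops nw w) + d)"
  have coll': "\<And>a b. a \<in> cV c' \<Longrightarrow> b \<in> cV c' \<Longrightarrow> a \<noteq> b \<Longrightarrow> traj (start a) (move a) 1 \<noteq> traj (start b) (move b) 1"
    using coll unfolding Let_def start_def[symmetric] move_def[symmetric] by auto
  have sm: "cpos c' w = start w + move w" if w: "w \<in> cV c'" for w
  proof (cases "w \<in> cV c")
    case True then show ?thesis using pos_old by (simp add: start_def move_def)
  next
    case False
    then obtain u where u: "u \<in> Ops" "w = nw u" using w V' by auto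
    then show ?thesis using False pos_new injnw by (simp add: start_def move_def add.assoc)
  qed
  have inj': "inj_on (cpos c') (cV c')"
  proof (rule inj_onI, rule ccontr)
    fix a b assume a: "a \<in> cV c'" and b: "b \<in> cV c'" and eq: "cpos c' a = cpos c' b" and ne: "a \<noteq> b"
    have "traj (start a) (move a) 1 = traj (start b) (move b) 1"
      unfolding traj1 using sm[OF a] sm[OF b] eq by simp
    then show False using coll'[OF a b ne] by simp
  qed
  have uniq: "x = y" if "x \<in> P" "y \<in> P" "{x, par x} = {y, par y}" for x y
  proof (rule ccontr)
    assume ne: "x \<noteq> y"
    have xy: "x = par y \<and> par x = y" using that(3) ne by (metis doubleton_eq_iff)
    have "h (par y) < h y" "h (par x) < h x" using hp that(1,2) by blast+
    then show False using xy by (metis less_asym)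
  qed
  define S where "S = {u\<in>Ops. has_nbr c u d}"
  define v where "v = (\<lambda>u. nbr c u d)"
  have vp: "v u \<in> cV c" "{u, v u} \<in> cE c" "cpos c (v u) = cpos c u + d" if "u \<in> S" for u
    using nbr_props[of c u d] that unfolding S_def v_def by auto
  have uv: "u \<noteq> v u" if "u \<in> S" for u using vp(3)[OF that] dir_ne[OF d] by auto
  define ch where "ch = (\<lambda>u. SOME x. x \<in> P \<and> {u, v u} = {x, par x})"
  have chp: "ch u \<in> P \<and> {u, v u} = {ch u, par (ch u)}" if "u \<in> S" for u
  proof -
    have "\<exists>x. x \<in> P \<and> {u, v u} = {x, par x}" using vp(2)[OF that] E by auto
    then show ?thesis unfolding ch_def by (rule someI_ex)
  qed
  have chcases: "(ch u = u \<and> par (ch u) = v u) \<or> (ch u = v u \<and> par (ch u) = u)" if "u \<in> S" for u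
    using chp[OF that] uv[OF that] by (metis doubleton_eq_iff)
  have chinj: "inj_on ch S"
  proof (rule inj_onI, rule ccontr)
    fix u u' assume u: "u \<in> S" and u': "u' \<in> S" and eq: "ch u = ch u'" and ne: "u \<noteq> u'"
    have "{u, v u} = {u', v u'}" using chp[OF u] chp[OF u'] eq by simp
    then have uu: "u = v u' \<and> u' = v u" using ne by (metis doubleton_eq_iff)
    have "cpos c u = cpos c u' + d" "cpos c u' = cpos c u + d" using vp(3)[OF u] vp(3)[OF u'] uu by metis+
    then have "cpos c u = cpos c u + d + d" by simp
    then have "d + d = 0" by (simp add: add.assoc)
    then show False using dir_ne[OF d] by simp
  qed
  have SOps: "S \<subseteq> Ops" unfolding S_def by auto
  have nwnot: "nw u \<notin> cV c" if "u \<in> Ops" for u using fresh that by auto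
  define iv where "iv = inv_into Ops nw"
  have ivnw: "iv (nw u) = u" if "u \<in> Ops" for u using injnw that unfolding iv_def by simp
  define par' where "par' = (\<lambda>x. if x \<in> nw ` Ops then (if iv x \<in> S then par (ch (iv x)) else iv x)
      else if x \<in> ch ` S then nw (inv_into S ch x) else par x)"
  define h' where "h' = (\<lambda>x. if x \<in> nw ` Ops then (if iv x \<in> S then (h (ch (iv x)) + h (par (ch (iv x)))) / 2
      else h (iv x) + 1) else h x)"
  define P' where "P' = P \<union> nw ` Ops"
  have par_nw: "par' (nw u) = (if u \<in> S then par (ch u) else u)" if "u \<in> Ops" for u
    using that ivnw unfolding par'_def by auto
  have h_nw: "h' (nw u) = (if u \<in> S then (h (ch u) + h (par (ch u))) / 2 else h u + 1)" if "u \<in> Ops" for u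
    using that ivnw unfolding h'_def by auto
  have h_old: "h' x = h x" if "x \<in> cV c" for x using that nwnot unfolding h'_def by auto
  have par_ch: "par' (ch u) = nw u" if "u \<in> S" for u
  proof -
    have "ch u \<in> cV c" using chp[OF that] P by auto
    then have "ch u \<notin> nw ` Ops" using nwnot by auto
    then show ?thesis using that chinj unfolding par'_def by simp
  qed
  have par_other: "par' x = par x" if "x \<in> cV c" "x \<notin> ch ` S" for x
    using that nwnot unfolding par'_def by auto
  have P'V: "P' \<subseteq> cV c'" using P V' unfolding P'_def by auto
  have hp': "\<forall>x\<in>P'. par' x \<in> cV c' \<and> h' (par' x) < h' x"
  proof
    fix x assume x: "x \<in> P'"
    show "par' x \<in> cV c' \<and> h' (par' x) < h' x"
    proof (cases "x \<in> nw ` Ops")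
      case True
      then obtain u where u: "u \<in> Ops" "x = nw u" by auto
      show ?thesis
      proof (cases "u \<in> S")
        case True
        have "par (ch u) \<in> cV c" using hp chp[OF True] by auto
        then show ?thesis using u True par_nw h_nw h_old V' hp chp[OF True] by auto
      next
        case False
        then show ?thesis using u par_nw h_nw h_old V' Ops by auto
      qed
    next
      case False
      then have xP: "x \<in> P" using x unfolding P'_def by auto
      then have xV: "x \<in> cV c" using P by auto
      show ?thesis
      proof (cases "x \<in> ch ` S")
        case True
        then obtain u where u: "u \<in> S" "x = ch u" by auto
        then show ?thesis using par_ch h_nw SOps V' h_old xV hp xP by auto
      next
        case False
        then show ?thesis using par_other xV hp xP h_old V' by auto
      qed
    qed
  qed
  have Sub: "{{u, nbr c u d} | u. u \<in> Ops \<and> has_nbr c u d} = {{u, v u} | u. u \<in> S}"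
    unfolding S_def v_def by auto
  have Add2: "{{nw u, nbr c u d} | u. u \<in> Ops \<and> has_nbr c u d} = {{nw u, v u} | u. u \<in> S}"
    unfolding S_def v_def by auto
  have E'': "cE c' = {{x, par' x}|x. x\<in>P'}"
  proof
    show "cE c' \<subseteq> {{x, par' x}|x. x\<in>P'}"
    proof
      fix e assume "e \<in> cE c'"
      then have "e \<in> (cE c - {{u, v u} | u. u \<in> S}) \<union> {{u, nw u} | u. u \<in> Ops} \<union> {{nw u, v u} | u. u \<in> S}"
        using E' Sub Add2 by simp
      then consider (a) "e \<in> cE c" "e \<notin> {{u, v u} | u. u \<in> S}"
        | (b) u where "u \<in> Ops" "e = {u, nw u}"
        | (c) u where "u \<in> S" "e = {nw u, v u}"
        by blast
      then show "e \<in> {{x, par' x}|x. x\<in>P'}"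
      proof cases
        case a
        then obtain x where x: "x \<in> P" "e = {x, par x}" using E by auto
        have "x \<notin> ch ` S"
        proof
          assume "x \<in> ch ` S"
          then obtain u where "u \<in> S" "x = ch u" by auto
          then have "e = {u, v u}" using chp x by auto
          then show False using a \<open>u \<in> S\<close> by auto
        qed
        then have "par' x = par x" using par_other x P by auto
        then have "e = {x, par' x}" "x \<in> P'" using x unfolding P'_def by auto
        then show ?thesis by blast
      next
        case b
        show ?thesis
        proof (cases "u \<in> S")
          case True
          from chcases[OF True] show ?thesis
          proof
            assume "ch u = u \<and> par (ch u) = v u"
            then have "par' u = nw u" "u \<in> P" using par_ch[OF True] chp[OF True] by auto
            then have "e = {u, par' u}" "u \<in> P'" using b unfolding P'_def by auto
            then show ?thesis by blast
          next
            assume "ch u = v u \<and> par (ch u) = u"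
            then have "par' (nw u) = u" using par_nw b True by auto
            then have "e = {nw u, par' (nw u)}" using b by (simp add: insert_commute)
            moreover have "nw u \<in> P'" using b unfolding P'_def by auto
            ultimately show ?thesis by blast
          qed
        next
          case False
          then have "par' (nw u) = u" using par_nw b by auto
          then have "e = {nw u, par' (nw u)}" using b by (simp add: insert_commute)
          moreover have "nw u \<in> P'" using b unfolding P'_def by auto
          ultimately show ?thesis by blast
        qed
      next
        case c
        from chcases[OF c(1)] show ?thesis
        proof
          assume "ch u = u \<and> par (ch u) = v u"
          then have "par' (nw u) = v u" using par_nw c SOps by auto
          then have "e = {nw u, par' (nw u)}" using c by simp
          moreover have "nw u \<in> P'" using c SOps unfolding P'_def by auto
          ultimately show ?thesis by blast
        next
          assume "ch u = v u \<and> par (ch u) = u"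
          then have "par' (v u) = nw u" "v u \<in> P" using par_ch[OF c(1)] chp[OF c(1)] by auto
          then have "e = {v u, par' (v u)}" "v u \<in> P'" using c unfolding P'_def by (auto simp: insert_commute)
          then show ?thesis by blast
        qed
      qed
    qed
  next
    show "{{x, par' x}|x. x\<in>P'} \<subseteq> cE c'"
    proof
      fix e assume "e \<in> {{x, par' x}|x. x\<in>P'}"
      then obtain x where x: "x \<in> P'" "e = {x, par' x}" by auto
      show "e \<in> cE c'"
      proof (cases "x \<in> nw ` Ops")
        case True
        then obtain u where u: "u \<in> Ops" "x = nw u" by auto
        show ?thesis
        proof (cases "u \<in> S")
          case True
          from chcases[OF True] show ?thesis
          proof
            assume "ch u = u \<and> par (ch u) = v u"
            then have "e = {nw u, v u}" using x u par_nw True by auto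
            then show ?thesis using E' Add2 True by auto
          next
            assume "ch u = v u \<and> par (ch u) = u"
            then have "e = {u, nw u}" using x u par_nw True by (auto simp: insert_commute)
            then show ?thesis using E' u by auto
          qed
        next
          case False
          then have "e = {u, nw u}" using x u par_nw by (auto simp: insert_commute)
          then show ?thesis using E' u by auto
        qed
      next
        case False
        then have xP: "x \<in> P" using x unfolding P'_def by auto
        then have xV: "x \<in> cV c" using P by auto
        show ?thesis
        proof (cases "x \<in> ch ` S")
          case True
          then obtain u where u: "u \<in> S" "x = ch u" by auto
          have px: "par' x = nw u" using par_ch[OF u(1)] u(2) by simp
          from chcases[OF u(1)] show ?thesis
          proof
            assume "ch u = u \<and> par (ch u) = v u"
            then have "e = {u, nw u}" using x(2) u(2) px by simp
            then show ?thesis using E' u SOps by auto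
          next
            assume "ch u = v u \<and> par (ch u) = u"
            then have "e = {nw u, v u}" using x(2) u(2) px by (simp add: insert_commute)
            then show ?thesis using E' Add2 u by auto
          qed
        next
          case False
          have "e = {x, par x}" using x par_other[OF xV False] by auto
          moreover have "e \<in> cE c" using calculation E xP by auto
          moreover have "e \<notin> {{u, v u} | u. u \<in> S}"
          proof
            assume "e \<in> {{u, v u} | u. u \<in> S}"
            then obtain u where u: "u \<in> S" "e = {u, v u}" by auto
            then have "x = ch u" using uniq[of x "ch u"] chp[OF u(1)] xP \<open>e = {x, par x}\<close> by auto
            then show False using False u by auto
          qed
          ultimately show ?thesis using E' Sub by auto
        qed
      qed
    qed
  qed
  show ?thesis unfolding good_def using fin' inj' P'V hp' E'' by blast
qed

lemma good_reach: "growth_step\<^sup>*\<^sup>* single_node c \<Longrightarrow> good c"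
proof (induction rule: rtranclp_induct)
  case base
  show ?case unfolding good_def single_node_def by (intro conjI exI[of _ "{}"]) auto
next
  case (step b c) then show ?case using good_step by blast
qed


lemma grid_adj_dir: "grid_adj x y \<Longrightarrow> x - y \<in> cardinal_dirs"
  unfolding grid_adj_def cardinal_dirs_def
  by (cases x, cases y) (auto simp: abs_if split: if_splits)

lemma grid_adj_sym: "grid_adj x y \<Longrightarrow> grid_adj y x"
  unfolding grid_adj_def by (simp add: abs_minus_commute)

lemma grid_adj_ne: "grid_adj x y \<Longrightarrow> x \<noteq> y"
  unfolding grid_adj_def by auto

lemma int_unit: "(t::real) = of_int k \<Longrightarrow> 0 < t \<Longrightarrow> t \<le> 1 \<Longrightarrow> k = 1"
  by simp

lemma trajd:
  assumes d: "d \<in> cardinal_dirs" and t: "0 < t" "t \<le> 1" and eq: "traj p d t = traj q 0 t"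
  shows "q = p + d"
proof -
  obtain p1 p2 q1 q2 where pq: "p = (p1,p2)" "q = (q1,q2)" by (cases p, cases q)
  have e1: "of_int p1 + t * of_int (fst d) = of_int q1" and e2: "of_int p2 + t * of_int (snd d) = of_int q2"
    using eq unfolding traj_def pq by auto
  from d consider "d = (1,0)" | "d = (-1,0)" | "d = (0,1)" | "d = (0,-1)"
    unfolding cardinal_dirs_def by auto
  then show ?thesis
  proof cases
    case 1
    then have "t = of_int (q1 - p1)" "p2 = q2" using e1 e2 by auto
    then have "q1 - p1 = 1" using int_unit t by blast
    then show ?thesis using pq 1 \<open>p2 = q2\<close> by simp
  next
    case 2
    then have "t = of_int (p1 - q1)" "p2 = q2" using e1 e2 by auto
    then have "p1 - q1 = 1" using int_unit t by blast
    then show ?thesis using pq 2 \<open>p2 = q2\<close> by simp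
  next
    case 3
    then have "t = of_int (q2 - p2)" "p1 = q1" using e1 e2 by auto
    then have "q2 - p2 = 1" using int_unit t by blast
    then show ?thesis using pq 3 \<open>p1 = q1\<close> by simp
  next
    case 4
    then have "t = of_int (p2 - q2)" "p1 = q1" using e1 e2 by auto
    then have "p2 - q2 = 1" using int_unit t by blast
    then show ?thesis using pq 4 \<open>p1 = q1\<close> by simp
  qed
qed

lemma traj0: "traj p 0 t = (of_int (fst p), of_int (snd p))"
  unfolding traj_def by simp

lemma has_cycle_mono: "has_cycle V' E' \<Longrightarrow> V' \<subseteq> V \<Longrightarrow> E' \<subseteq> E \<Longrightarrow> has_cycle V E"
  unfolding has_cycle_def by (meson order.trans subsetD)

lemma add_leaf_step:
  assumes g: "good c" and a: "a \<in> cV c" and d: "d \<in> cardinal_dirs"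
    and free: "\<forall>b\<in>cV c. cpos c b \<noteq> cpos c a + d" and m: "m \<notin> cV c"
  shows "growth_step c (c\<lparr>cV := insert m (cV c), cpos := (cpos c)(m := cpos c a + d), cE := insert {a,m} (cE c)\<rparr>)"
proof -
  have inj: "inj_on (cpos c) (cV c)" using g unfolding good_def by blast
  have hn: "\<not> has_nbr c a d" using free unfolding has_nbr_def by blast
  have S: "{u\<in>{a}. has_nbr c u d} = {}" using hn by auto
  have disp0: "disp c {a} d w = 0" for w unfolding disp_def S by simp
  have S2: "{{u, nbr c u d} | u. u \<in> {a} \<and> has_nbr c u d} = {}"
          "{{(\<lambda>_. m) u, nbr c u d} | u. u \<in> {a} \<and> has_nbr c u d} = {}" using hn by auto
  have ivm: "inv_into {a} (\<lambda>_. m) m = a" by (simp add: inv_into_def)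
  define st where "st = (\<lambda>w. if w \<in> cV c then cpos c w else cpos c a)"
  define mv where "mv = (\<lambda>w. if w \<in> cV c then (0::point) else d)"
  have coll: "traj (st x) (mv x) t \<noteq> traj (st y) (mv y) t"
    if x': "x \<in> insert m (cV c)" and y': "y \<in> insert m (cV c)" and ne: "x \<noteq> y" and t: "0 < t" "t \<le> 1" for x y and t :: real
  proof (cases "x \<in> cV c")
    case xT: True
    show ?thesis
    proof (cases "y \<in> cV c")
      case True
      have "cpos c x \<noteq> cpos c y" using inj xT True ne by (meson inj_onD)
      then show ?thesis using xT True by (simp add: st_def mv_def traj0 prod_eq_iff)
    next
      case False
      show ?thesis
      proof
        assume "traj (st x) (mv x) t = traj (st y) (mv y) t"
        then have "traj (cpos c a) d t = traj (cpos c x) 0 t" using xT False by (simp add: st_def mv_def)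
        then have "cpos c x = cpos c a + d" using trajd d t by blast
        then show False using free xT by blast
      qed
    qed
  next
    case xF: False
    then have yT: "y \<in> cV c" using x' y' ne by auto
    show ?thesis
    proof
      assume "traj (st x) (mv x) t = traj (st y) (mv y) t"
      then have "traj (cpos c a) d t = traj (cpos c y) 0 t" using xF yT by (simp add: st_def mv_def)
      then have "cpos c y = cpos c a + d" using trajd d t by blast
      then show False using free yT by blast
    qed
  qed
  show ?thesis unfolding growth_step_def
    apply (intro exI[of _ d] exI[of _ "{a}"] exI[of _ "\<lambda>_. m"] conjI)
               apply (use a d m disp0 S2 in auto)[10]
    apply (unfold Let_def, intro ballI impI allI)
    subgoal for x y t
      using coll[of x y t] by (cases "x \<in> cV c"; cases "y \<in> cV c") (auto simp: disp0 ivm st_def mv_def)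
    done
qed


lemma good_edges: assumes "good c" "e \<in> cE c" shows "e \<subseteq> cV c"
proof -
  obtain P par and h :: "nat \<Rightarrow> real" where P: "P \<subseteq> cV c"
    and hp: "\<forall>x\<in>P. par x \<in> cV c \<and> h (par x) < h x" and Ec: "cE c = {{x, par x}|x. x\<in>P}"
    using assms(1)[unfolded good_def] by (elim exE conjE) (rule that; assumption)
  then show ?thesis using assms(2) by auto
qed

lemma grow_n:
  "card V = n \<Longrightarrow> is_shape V E \<Longrightarrow> \<not> has_cycle V E \<Longrightarrow>
   \<exists>c. growth_step\<^sup>*\<^sup>* single_node c \<and> translate_equiv (shape_of c) (V, E)"
proof (induction n arbitrary: V E)
  case 0
  then show ?case unfolding is_shape_def by simp
next
  case (Suc n)
  have fin: "finite V" and ne: "V \<noteq> {}"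
    and ed: "\<forall>e\<in>E. \<exists>p q. e = {p, q} \<and> p \<in> V \<and> q \<in> V \<and> grid_adj p q"
    and conn: "connected_graph V E" using Suc.prems(2) unfolding is_shape_def by auto
  show ?case
  proof (cases n)
    case 0
    then have "card V = 1" using Suc.prems(1) by simp
    then obtain p where V: "V = {p}" by (rule card_1_singletonE)
    have E: "E = {}"
    proof (rule ccontr)
      assume "E \<noteq> {}"
      then obtain e where "e \<in> E" by blast
      then obtain q r where "q \<in> V" "r \<in> V" "grid_adj q r" using ed by blast
      then show False using V grid_adj_ne by blast
    qed
    have pp: "(0::int, 0::int) + p = p" by (cases p) simp
    have "translate_equiv (shape_of single_node) (V, E)"
      unfolding translate_equiv_def shape_of_def single_node_def V E
      using pp by (intro exI[of _ p]) simp
    then show ?thesis by blast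
  next
    case (Suc k)
    have ed2: "\<forall>e\<in>E. \<exists>p q. e = {p,q} \<and> p\<in>V \<and> q\<in>V \<and> p\<noteq>q"
    proof
      fix e assume "e \<in> E"
      then obtain p q where "e = {p,q}" "p\<in>V" "q\<in>V" "grid_adj p q" using ed by blast
      then show "\<exists>p q. e = {p,q} \<and> p\<in>V \<and> q\<in>V \<and> p\<noteq>q" using grid_adj_ne by blast
    qed
    have "2 \<le> card V" using Suc.prems(1) Suc by simp
    then obtain x y where xy: "{x,y} \<in> E" "x \<noteq> y" and leaf: "\<forall>z. {x,z}\<in>E \<longrightarrow> z = y"
      using leaf_exists[OF fin conn ed2 _ Suc.prems(3)] by blast
    obtain p q where pq: "{x,y} = {p,q}" "p \<in> V" "q \<in> V" "grid_adj p q"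
      using bspec[OF ed xy(1)] by (elim exE conjE)
    have pq2: "(x = p \<and> y = q) \<or> (x = q \<and> y = p)" using pq(1) by (metis doubleton_eq_iff)
    have xV: "x \<in> V" and yV: "y \<in> V" using pq2 pq by auto
    have adj: "grid_adj x y" using pq2 pq(4) grid_adj_sym by blast
    define V' where "V' = V - {x}"
    define E' where "E' = E - {{x,y}}"
    have cardV': "card V' = n" using Suc.prems(1) xV fin unfolding V'_def by simp
    have shape': "is_shape V' E'" unfolding is_shape_def
    proof (intro conjI)
      show "finite V'" using fin unfolding V'_def by simp
      show "V' \<noteq> {}" using yV xy(2) unfolding V'_def by auto
      show "connected_graph V' E'" using remove_leaf_conn[OF conn leaf yV xy(2)] unfolding V'_def E'_def .
      show "\<forall>e\<in>E'. \<exists>p q. e = {p, q} \<and> p \<in> V' \<and> q \<in> V' \<and> grid_adj p q"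
      proof
        fix e assume e: "e \<in> E'"
        then obtain p q where pq: "e = {p,q}" "p \<in> V" "q \<in> V" "grid_adj p q" using ed unfolding E'_def by blast
        have "p \<noteq> x"
        proof
          assume "p = x"
          then have "{x,q} \<in> E" using e pq unfolding E'_def by auto
          then have "q = y" using leaf by blast
          then show False using e pq \<open>p = x\<close> unfolding E'_def by auto
        qed
        moreover have "q \<noteq> x"
        proof
          assume "q = x"
          then have "{x,p} \<in> E" using e pq unfolding E'_def by (auto simp: insert_commute)
          then have "p = y" using leaf by blast
          then show False using e pq \<open>q = x\<close> unfolding E'_def by (auto simp: insert_commute)
        qed
        ultimately show "\<exists>p q. e = {p, q} \<and> p \<in> V' \<and> q \<in> V' \<and> grid_adj p q"
          using pq unfolding V'_def by blast
      qed
    qed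
    have nc': "\<not> has_cycle V' E'" using Suc.prems(3) has_cycle_mono unfolding V'_def E'_def by blast
    obtain c where reach: "growth_step\<^sup>*\<^sup>* single_node c" and tr: "translate_equiv (shape_of c) (V', E')"
      using Suc.IH[OF cardV' shape' nc'] by blast
    have g: "good c" using good_reach[OF reach] .
    have finc: "finite (cV c)" using g unfolding good_def by (elim conjE)
    obtain \<tau> where tV: "V' = (\<lambda>p. p + \<tau>) ` cpos c ` cV c"
      and tE: "E' = (\<lambda>e. (\<lambda>p. p + \<tau>) ` e) ` (\<lambda>e. cpos c ` e) ` cE c"
      using tr unfolding translate_equiv_def shape_of_def by auto
    have "y \<in> V'" using yV xy(2) unfolding V'_def by auto
    then obtain a where a: "a \<in> cV c" "cpos c a + \<tau> = y" using tV by auto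
    define d where "d = x - y"
    have d: "d \<in> cardinal_dirs" using grid_adj_dir[OF adj] unfolding d_def .
    have ad: "cpos c a + d + \<tau> = x" using a(2) unfolding d_def by (simp add: algebra_simps)
    have free: "\<forall>b\<in>cV c. cpos c b \<noteq> cpos c a + d"
    proof (intro ballI notI)
      fix b assume b: "b \<in> cV c" "cpos c b = cpos c a + d"
      then have "x \<in> V'" using tV ad by force
      then show False unfolding V'_def by simp
    qed
    obtain m where m: "m \<notin> cV c" using ex_new_if_finite[OF infinite_UNIV_nat finc] by blast
    define c' where "c' = c\<lparr>cV := insert m (cV c), cpos := (cpos c)(m := cpos c a + d), cE := insert {a,m} (cE c)\<rparr>"
    have step: "growth_step c c'" using add_leaf_step[OF g a(1) d free m] unfolding c'_def .
    have pos_eq: "cpos c' ` e = cpos c ` e" if "e \<subseteq> cV c" for e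
      using that m unfolding c'_def by (auto intro!: image_cong)
    have "translate_equiv (shape_of c') (V, E)"
      unfolding translate_equiv_def shape_of_def
    proof (intro exI[of _ \<tau>] conjI)
      have c'1: "cV c' = insert m (cV c)" "cpos c' m = cpos c a + d" "cE c' = insert {a,m} (cE c)"
        unfolding c'_def by simp_all
      have "cpos c' ` cV c' = insert (cpos c a + d) (cpos c ` cV c)"
        using pos_eq[of "cV c"] c'1 by simp
      then show "fst (V, E) = (\<lambda>p. p + \<tau>) ` fst (cpos c' ` cV c', (`) (cpos c') ` cE c')"
        using tV ad xV unfolding V'_def by auto
      have "(`) (cpos c') ` cE c' = insert {cpos c a, cpos c a + d} ((`) (cpos c) ` cE c)"
      proof -
        have "(`) (cpos c') ` cE c = (`) (cpos c) ` cE c"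
          by (rule image_cong) (simp_all add: pos_eq good_edges[OF g])
        moreover have "cpos c' ` {a, m} = {cpos c a, cpos c a + d}" using a(1) m unfolding c'_def by auto
        ultimately show ?thesis using c'1 by simp
      qed
      moreover have "(\<lambda>p. p + \<tau>) ` {cpos c a, cpos c a + d} = {x, y}" using a(2) ad by auto
      ultimately have "(\<lambda>e. (\<lambda>p. p + \<tau>) ` e) ` ((`) (cpos c') ` cE c') = insert {x,y} E'"
        unfolding tE by (simp only: image_insert)
      also have "\<dots> = E" unfolding E'_def using xy(1) by (rule insert_Diff)
      finally show "snd (V, E) = (\<lambda>e. (\<lambda>p. p + \<tau>) ` e) ` snd (cpos c' ` cV c', (`) (cpos c') ` cE c')"
        by simp
    qed
    moreover have "growth_step\<^sup>*\<^sup>* single_node c'" using reach step by simp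
    ultimately show ?thesis by blast
  qed
qed

theorem proposition5p1:
  fixes V :: "point set" and E :: "point set set"
  assumes "is_shape V E"
  shows "(\<exists>c. growth_step\<^sup>*\<^sup>* single_node c \<and> translate_equiv (shape_of c) (V, E))
         \<longleftrightarrow> is_tree V E"
proof
  assume "\<exists>c. growth_step\<^sup>*\<^sup>* single_node c \<and> translate_equiv (shape_of c) (V, E)"
  then obtain c where reach: "growth_step\<^sup>*\<^sup>* single_node c" and tr: "translate_equiv (shape_of c) (V, E)" by blast
  have g: "good c" using good_reach[OF reach] .
  obtain P par and h :: "nat \<Rightarrow> real" where P: "P \<subseteq> cV c"
    and hp: "\<forall>x\<in>P. par x \<in> cV c \<and> h (par x) < h x" and Ec: "cE c = {{x, par x}|x. x\<in>P}"
    and inj: "inj_on (cpos c) (cV c)"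
    using g[unfolded good_def] by (elim exE conjE) (rule that; assumption)
  obtain \<tau> where tV: "V = (\<lambda>p. p + \<tau>) ` cpos c ` cV c"
    and tE: "E = (\<lambda>e. (\<lambda>p. p + \<tau>) ` e) ` (\<lambda>e. cpos c ` e) ` cE c"
    using tr unfolding translate_equiv_def shape_of_def by auto
  define gg where "gg = (\<lambda>x. cpos c x + \<tau>)"
  have injg: "inj_on gg (cV c)" using inj unfolding gg_def inj_on_def by auto
  define iv where "iv = inv_into (cV c) gg"
  have ivg: "iv (gg x) = x" if "x \<in> cV c" for x using injg that unfolding iv_def by simp
  define parV where "parV = (\<lambda>p. gg (par (iv p)))"
  define hV where "hV = (\<lambda>p. h (iv p))"
  have EV: "E = {{p, parV p}|p. p \<in> gg ` P}"
  proof -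
    have Ec': "cE c = (\<lambda>x. {x, par x}) ` P" unfolding Ec by auto
    have "E = (\<lambda>x. {gg x, gg (par x)}) ` P" unfolding tE Ec' gg_def by (simp add: image_image)
    also have "\<dots> = (\<lambda>p. {p, parV p}) ` gg ` P" unfolding image_image
      by (rule image_cong) (use ivg P in \<open>auto simp: parV_def\<close>)
    also have "\<dots> = {{p, parV p}|p. p \<in> gg ` P}" by blast
    finally show ?thesis .
  qed
  have hpV: "\<forall>p\<in>gg ` P. hV (parV p) < hV p"
    using hp ivg P unfolding hV_def parV_def by auto
  have "\<not> has_cycle V E" using tstruct_no_cycle[OF hpV EV] .
  moreover have "connected_graph V E" using assms unfolding is_shape_def by blast
  ultimately show "is_tree V E" unfolding is_tree_def by blast
next
  assume "is_tree V E"
  then show "\<exists>c. growth_step\<^sup>*\<^sup>* single_node c \<and> translate_equiv (shape_of c) (V, E)"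
    using grow_n[OF refl assms] unfolding is_tree_def by blast
qed

end
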